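(* Suppose $\mathcal U$ is strongly stable with parameters $b>0$, $q\ge1$ (and $a>0$). Then $\mathcal U$ is $L$-Lipschitz on $\mathcal D^\Delta$, i.e. $|\mathcal U(F_1)-\mathcal U(F_2)|\le L\|F_1-F_2\|$ for all $F_1,F_2\in\mathcal D^\Delta$, with $L=b\bigl(1+\max_{i,j\in\mathbb K}\|F^{(i)}-F^{(j)}\|^{q-1}\bigr)$.
   Context: Let $K\ge1$, $\mathbb K=\{1,\dots,K\}$, and let $F^{(1)},\dots,F^{(K)}$ be distribution functions on $\mathbb R$ (the reward distributions of $K$ arms; arm $i$ produces i.i.d. rewards $X^{(i)}_1,X^{(i)}_2,\dots$ with distribution $F^{(i)}$). Let $\hat F^{(i)}_t(y)=\frac1t\sum_{s=1}^t\mathbf 1\{X^{(i)}_s\le y\}$, and let $\hat{\mathcal D}$ be the set of empirical distribution functions $y\mapsto\frac1t\sum_{s\le t}\mathbf 1\{x_s\le y\}$ of all finite real sequences $x_1,\dots,x_t$, $t\ge1$. $\Delta_{K-1}$ is the probability simplex, $F_p=\sum_ip_iF^{(i)}$, $\mathcal D^\Delta=\{F_p:p\in\Delta_{K-1}\}$. $(L,\|\cdot\|)$ is a Banach space of bounded functions on $\mathbb R$ containing $\mathcal D^\Delta\cup\hat{\mathcal D}$, and $\mathcal U:L\to\mathbb R$. $\mathcal U$ is strongly stable if (1) there exist $b>0,q\ge1$ with $|\mathcal U(F)-\mathcal U(G)|\le b(\|F-G\|+\|F-G\|^q)$ for all $F\in\mathcal D^\Delta$, $G\in\mathcal D^\Delta\cup\hat{\mathcal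 D}$, and (2) there is $a>0$ with $\mathbb P(\|\hat F^{(i)}_t-F^{(i)}\|\ge x)\le2\exp(-atx^2)$ for all $i$, $x>0$, $t\ge1$. *)

theory Defs
  imports "HOL-Analysis.Analysis" "HOL-Probability.Probability"
begin

definition dist_fun :: "(real \<Rightarrow> real) \<Rightarrow> bool" where
  "dist_fun F \<longleftrightarrow> mono F \<and> (\<forall>x. continuous (at_right x) F)
     \<and> (F \<longlongrightarrow> 0) at_bot \<and> (F \<longlongrightarrow> 1) at_top"

definition prob_simplex :: "nat \<Rightarrow> (nat \<Rightarrow> real) set" where
  "prob_simplex K = {p. (\<forall>i\<in>{1..K}. 0 \<le> p i) \<and> (\<Sum>i=1..K. p i) = 1}"

definition mixture :: "nat \<Rightarrow> (nat \<Rightarrow> real \<Rightarrow> real) \<Rightarrow> (nat \<Rightarrow> real) \<Rightarrow> real \<Rightarrow> real" where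
  "mixture K F p = (\<lambda>y. \<Sum>i=1..K. p i * F i y)"

definition mixtures :: "nat \<Rightarrow> (nat \<Rightarrow> real \<Rightarrow> real) \<Rightarrow> (real \<Rightarrow> real) set" where
  "mixtures K F = mixture K F ` prob_simplex K"

definition emp_df :: "(nat \<Rightarrow> real) \<Rightarrow> nat \<Rightarrow> real \<Rightarrow> real" where
  "emp_df x t = (\<lambda>y. (1 / real t) * (\<Sum>s=1..t. if x s \<le> y then 1 else 0))"

definition emp_dfs :: "(real \<Rightarrow> real) set" where
  "emp_dfs = {emp_df x t | x t. t \<ge> 1}"

definition banach_fun_space :: "(real \<Rightarrow> real) set \<Rightarrow> ((real \<Rightarrow> real) \<Rightarrow> real) \<Rightarrow> bool" where
  "banach_fun_space L nrm \<longleftrightarrow>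
     (\<forall>f\<in>L. \<exists>B. \<forall>y. \<bar>f y\<bar> \<le> B) \<and>
     (\<lambda>_. 0) \<in> L \<and>
     (\<forall>f\<in>L. \<forall>g\<in>L. (\<lambda>y. f y + g y) \<in> L) \<and>
     (\<forall>f\<in>L. \<forall>c::real. (\<lambda>y. c * f y) \<in> L) \<and>
     (\<forall>f\<in>L. 0 \<le> nrm f \<and> (nrm f = 0 \<longleftrightarrow> f = (\<lambda>_. 0))) \<and>
     (\<forall>f\<in>L. \<forall>g\<in>L. nrm (\<lambda>y. f y + g y) \<le> nrm f + nrm g) \<and>
     (\<forall>f\<in>L. \<forall>c::real. nrm (\<lambda>y. c * f y) = \<bar>c\<bar> * nrm f) \<and>
     (\<forall>u::nat \<Rightarrow> real \<Rightarrow> real. (\<forall>n. u n \<in> L) \<longrightarrow>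
        (\<forall>e>0. \<exists>N. \<forall>m\<ge>N. \<forall>n\<ge>N. nrm (\<lambda>y. u m y - u n y) < e) \<longrightarrow>
        (\<exists>f\<in>L. (\<lambda>n. nrm (\<lambda>y. u n y - f y)) \<longlonglongrightarrow> 0))"

text \<open>Real power with the convention 0^0 = 1.\<close>
definition rpow :: "real \<Rightarrow> real \<Rightarrow> real" where
  "rpow x e = (if e = 0 then 1 else x powr e)"

end

theory Submission
  imports Defs
begin

lemma bfs_add: "banach_fun_space L nrm \<Longrightarrow> f \<in> L \<Longrightarrow> g \<in> L \<Longrightarrow> (\<lambda>y. f y + g y) \<in> L"
  unfolding banach_fun_space_def by blast
lemma bfs_scale: "banach_fun_space L nrm \<Longrightarrow> f \<in> L \<Longrightarrow> (\<lambda>y. c * f y) \<in> L"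
  unfolding banach_fun_space_def by blast
lemma bfs_tri: "banach_fun_space L nrm \<Longrightarrow> f \<in> L \<Longrightarrow> g \<in> L \<Longrightarrow> nrm (\<lambda>y. f y + g y) \<le> nrm f + nrm g"
  unfolding banach_fun_space_def by blast
lemma bfs_hom: "banach_fun_space L nrm \<Longrightarrow> f \<in> L \<Longrightarrow> nrm (\<lambda>y. c * f y) = \<bar>c\<bar> * nrm f"
  unfolding banach_fun_space_def by blast
lemma bfs_nn: "banach_fun_space L nrm \<Longrightarrow> f \<in> L \<Longrightarrow> 0 \<le> nrm f"
  unfolding banach_fun_space_def by blast

lemma bfs_sum:
  assumes L: "banach_fun_space L nrm" and S: "finite S"
  shows "(\<forall>k\<in>S. g k \<in> L) \<Longrightarrow> (\<lambda>y. \<Sum>k\<in>S. g k y) \<in> L \<and> nrm (\<lambda>y. \<Sum>k\<in>S. g k y) \<le> (\<Sum>k\<in>S. nrm (g k))"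
  using S
proof (induction S rule: finite_induct)
  case empty
  then show ?case using L unfolding banach_fun_space_def by auto
next
  case (insert x S)
  then have h: "(\<lambda>y. \<Sum>k\<in>S. g k y) \<in> L" "nrm (\<lambda>y. \<Sum>k\<in>S. g k y) \<le> (\<Sum>k\<in>S. nrm (g k))"
    and gx: "g x \<in> L" by auto
  have e: "(\<lambda>y. \<Sum>k\<in>insert x S. g k y) = (\<lambda>y. g x y + (\<Sum>k\<in>S. g k y))"
    using insert by simp
  have m: "(\<lambda>y. g x y + (\<Sum>k\<in>S. g k y)) \<in> L" using bfs_add[OF L gx h(1)] .
  have "nrm (\<lambda>y. g x y + (\<Sum>k\<in>S. g k y)) \<le> nrm (g x) + nrm (\<lambda>y. \<Sum>k\<in>S. g k y)"
    using bfs_tri[OF L gx h(1)] .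
  also have "\<dots> \<le> (\<Sum>k\<in>insert x S. nrm (g k))" using h insert by simp
  finally show ?case unfolding e using m by simp
qed

lemma F_in:
  assumes LD: "mixtures K F \<union> emp_dfs \<subseteq> L" and i: "i \<in> {1..K}"
  shows "F i \<in> L"
proof -
  define p where "p = (\<lambda>k. if k = i then 1 else 0::real)"
  have "p \<in> prob_simplex K" using i unfolding prob_simplex_def p_def by auto
  moreover have "mixture K F p = F i"
  proof
    fix y
    have "(\<Sum>k=1..K. p k * F k y) = (\<Sum>k=1..K. if k = i then F k y else 0)"
      by (rule sum.cong) (auto simp: p_def)
    also have "\<dots> = F i y" using i by (simp add: sum.delta)
    finally show "mixture K F p y = F i y" unfolding mixture_def .
  qed
  ultimately show ?thesis using LD unfolding mixtures_def by (metis UnCI image_eqI subsetD)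
qed

lemma diff_in:
  assumes L: "banach_fun_space L nrm" and f: "f \<in> L" and g: "g \<in> L"
  shows "(\<lambda>y. f y - g y) \<in> L"
proof -
  have "(\<lambda>y. f y - g y) = (\<lambda>y. f y + (-1) * g y)" by simp
  then show ?thesis using bfs_add[OF L f bfs_scale[OF L g, of "-1"]] by simp
qed

lemma mix_diff_bound:
  assumes L: "banach_fun_space L nrm" and LD: "mixtures K F \<union> emp_dfs \<subseteq> L"
    and p: "p \<in> prob_simplex K" and r: "r \<in> prob_simplex K"
    and D: "\<And>i j. i \<in> {1..K} \<Longrightarrow> j \<in> {1..K} \<Longrightarrow> nrm (\<lambda>y. F i y - F j y) \<le> D"
  shows "nrm (\<lambda>y. mixture K F p y - mixture K F r y) \<le> D"
proof -
  define P where "P = {1..K} \<times> {1..K}"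
  define g where "g = (\<lambda>k::nat\<times>nat. \<lambda>y. p (fst k) * r (snd k) * (F (fst k) y - F (snd k) y))"
  have p0: "\<And>i. i \<in> {1..K} \<Longrightarrow> 0 \<le> p i" and p1: "(\<Sum>i=1..K. p i) = 1"
    using p unfolding prob_simplex_def by auto
  have r0: "\<And>i. i \<in> {1..K} \<Longrightarrow> 0 \<le> r i" and r1: "(\<Sum>i=1..K. r i) = 1"
    using r unfolding prob_simplex_def by auto
  have eq: "(\<lambda>y. mixture K F p y - mixture K F r y) = (\<lambda>y. \<Sum>k\<in>P. g k y)"
  proof
    fix y
    have "(\<Sum>k\<in>P. g k y) = (\<Sum>i=1..K. \<Sum>j=1..K. p i * r j * (F i y - F j y))"
      unfolding P_def g_def by (simp add: sum.cartesian_product case_prod_beta)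
    also have "\<dots> = (\<Sum>i=1..K. \<Sum>j=1..K. p i * F i y * r j) - (\<Sum>i=1..K. \<Sum>j=1..K. p i * (r j * F j y))"
      by (simp add: sum_subtractf algebra_simps)
    also have "\<dots> = (\<Sum>i=1..K. p i * F i y) * (\<Sum>j=1..K. r j) - (\<Sum>i=1..K. p i) * (\<Sum>j=1..K. r j * F j y)"
      by (simp only: sum_product)
    also have "\<dots> = mixture K F p y - mixture K F r y"
      unfolding mixture_def p1 r1 by simp
    finally show "mixture K F p y - mixture K F r y = (\<Sum>k\<in>P. g k y)" by simp
  qed
  have gin: "\<forall>k\<in>P. g k \<in> L"
  proof
    fix k assume k: "k \<in> P"
    have "(\<lambda>y. F (fst k) y - F (snd k) y) \<in> L"
      using diff_in[OF L F_in[OF LD] F_in[OF LD]] k unfolding P_def by auto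
    then show "g k \<in> L" unfolding g_def using bfs_scale[OF L] by simp
  qed
  have "nrm (\<lambda>y. \<Sum>k\<in>P. g k y) \<le> (\<Sum>k\<in>P. nrm (g k))"
    using bfs_sum[OF L _ gin] unfolding P_def by auto
  also have "\<dots> \<le> (\<Sum>k\<in>P. p (fst k) * r (snd k) * D)"
  proof (rule sum_mono)
    fix k assume k: "k \<in> P"
    have inL: "(\<lambda>y. F (fst k) y - F (snd k) y) \<in> L"
      using diff_in[OF L F_in[OF LD] F_in[OF LD]] k unfolding P_def by auto
    have nn: "0 \<le> p (fst k) * r (snd k)" using k p0 r0 unfolding P_def by auto
    have "nrm (g k) = \<bar>p (fst k) * r (snd k)\<bar> * nrm (\<lambda>y. F (fst k) y - F (snd k) y)"
      unfolding g_def using bfs_hom[OF L inL] by simp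
    also have "\<dots> \<le> p (fst k) * r (snd k) * D"
      using nn D[of "fst k" "snd k"] k unfolding P_def by (auto intro: mult_left_mono)
    finally show "nrm (g k) \<le> p (fst k) * r (snd k) * D" .
  qed
  also have "\<dots> = (\<Sum>i=1..K. \<Sum>j=1..K. p i * r j) * D"
    unfolding P_def by (simp add: sum.cartesian_product case_prod_beta sum_distrib_right)
  also have "\<dots> = (\<Sum>i=1..K. p i) * (\<Sum>j=1..K. r j) * D"
    by (simp only: sum_product)
  also have "\<dots> = D" using p1 r1 by simp
  finally show ?thesis using eq by simp
qed

lemma powr_bound:
  assumes d0: "0 \<le> d" and dD: "d \<le> D" and q: "q \<ge> 1"
  shows "d powr q \<le> rpow D (q - 1) * d"
proof (cases "q = 1")
  case True
  then show ?thesis using d0 by (simp add: rpow_def)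
next
  case False
  show ?thesis
  proof (cases "d = 0")
    case True
    then show ?thesis by simp
  next
    case dn: False
    then have dp: "d > 0" using d0 by simp
    have "d powr q = d powr (q - 1) * d" using powr_add[of d "q - 1" 1] dp by simp
    also have "\<dots> \<le> D powr (q - 1) * d"
      using powr_mono2[of "q - 1" d D] q d0 dD dp by (intro mult_right_mono) auto
    finally show ?thesis using False by (simp add: rpow_def)
  qed
qed

theorem lemma15:
  fixes K :: nat
    and F :: "nat \<Rightarrow> real \<Rightarrow> real"
    and L :: "(real \<Rightarrow> real) set"
    and nrm :: "(real \<Rightarrow> real) \<Rightarrow> real"
    and U :: "(real \<Rightarrow> real) \<Rightarrow> real"
    and M :: "'w measure"
    and X :: "nat \<Rightarrow> nat \<Rightarrow> 'w \<Rightarrow> real"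
    and a b q :: real
  assumes K: "K \<ge> 1"
    and Fdf: "\<forall>i\<in>{1..K}. dist_fun (F i)"
    and M: "prob_space M"
    and Xrv: "\<forall>i\<in>{1..K}. \<forall>s\<ge>1. X i s \<in> borel_measurable M"
    and Xind: "\<forall>i\<in>{1..K}. prob_space.indep_vars M (\<lambda>_. borel) (X i) {1..}"
    and Xdist: "\<forall>i\<in>{1..K}. \<forall>s\<ge>1. cdf (distr M borel (X i s)) = F i"
    and L: "banach_fun_space L nrm"
    and LD: "mixtures K F \<union> emp_dfs \<subseteq> L"
    and b: "b > 0" and q: "q \<ge> 1" and a: "a > 0"
    and stab1: "\<forall>F1\<in>mixtures K F. \<forall>G\<in>mixtures K F \<union> emp_dfs.
        \<bar>U F1 - U G\<bar> \<le> b * (nrm (\<lambda>y. F1 y - G y) + nrm (\<lambda>y. F1 y - G y) powr q)"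
    and stab2: "\<forall>i\<in>{1..K}. \<forall>x>0. \<forall>t\<ge>1.
        measure M {\<omega> \<in> space M. nrm (\<lambda>y. emp_df (\<lambda>s. X i s \<omega>) t y - F i y) \<ge> x}
          \<le> 2 * exp (- a * real t * x\<^sup>2)"
  shows "\<forall>F1\<in>mixtures K F. \<forall>F2\<in>mixtures K F.
           \<bar>U F1 - U F2\<bar> \<le>
             b * (1 + Max {rpow (nrm (\<lambda>y. F i y - F j y)) (q - 1) | i j. i \<in> {1..K} \<and> j \<in> {1..K}})
             * nrm (\<lambda>y. F1 y - F2 y)"
proof (intro ballI)
  fix F1 F2 assume F1: "F1 \<in> mixtures K F" and F2: "F2 \<in> mixtures K F"
  define P where "P = {1..K} \<times> {1..K}"
  define nf where "nf = (\<lambda>k. nrm (\<lambda>y. F (fst k) y - F (snd k) y))"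
  define S where "S = {rpow (nrm (\<lambda>y. F i y - F j y)) (q - 1) | i j. i \<in> {1..K} \<and> j \<in> {1..K}}"
  have Pfin: "finite P" and Pne: "P \<noteq> {}" unfolding P_def using K by auto
  have "Max (nf ` P) \<in> nf ` P" using Max_in[of "nf ` P"] Pfin Pne by auto
  then obtain k0 where k0: "k0 \<in> P" "nf k0 = Max (nf ` P)" by force
  have Dge: "\<And>i j. i \<in> {1..K} \<Longrightarrow> j \<in> {1..K} \<Longrightarrow> nrm (\<lambda>y. F i y - F j y) \<le> nf k0"
  proof -
    fix i j assume "i \<in> {1..K}" "j \<in> {1..K}"
    then have "(i, j) \<in> P" unfolding P_def by auto
    then have "nf (i, j) \<le> Max (nf ` P)" using Pfin by auto
    then show "nrm (\<lambda>y. F i y - F j y) \<le> nf k0" using k0 unfolding nf_def by simp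
  qed
  have Seq: "S = (\<lambda>k. rpow (nf k) (q - 1)) ` P"
    unfolding S_def P_def nf_def by force
  have R0: "rpow (nf k0) (q - 1) \<le> Max S"
    using Seq Pfin k0(1) by auto
  obtain p where p: "p \<in> prob_simplex K" "F1 = mixture K F p" using F1 unfolding mixtures_def by auto
  obtain r where r: "r \<in> prob_simplex K" "F2 = mixture K F r" using F2 unfolding mixtures_def by auto
  define d where "d = nrm (\<lambda>y. F1 y - F2 y)"
  have dD: "d \<le> nf k0" unfolding d_def p(2) r(2)
    by (rule mix_diff_bound[OF L LD p(1) r(1) Dge])
  have "(\<lambda>y. F1 y - F2 y) \<in> L" using diff_in[OF L] F1 F2 LD by auto
  then have d0: "0 \<le> d" unfolding d_def using bfs_nn[OF L] by blast
  have "\<bar>U F1 - U F2\<bar> \<le> b * (d + d powr q)" using stab1 F1 F2 unfolding d_def by blast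
  also have "\<dots> \<le> b * (d + Max S * d)"
  proof -
    have "d powr q \<le> rpow (nf k0) (q - 1) * d" by (rule powr_bound[OF d0 dD q])
    also have "\<dots> \<le> Max S * d" using R0 d0 by (rule mult_right_mono)
    finally show ?thesis using b by simp
  qed
  also have "\<dots> = b * (1 + Max S) * d" by (simp add: algebra_simps)
  finally show "\<bar>U F1 - U F2\<bar> \<le>
             b * (1 + Max {rpow (nrm (\<lambda>y. F i y - F j y)) (q - 1) | i j. i \<in> {1..K} \<and> j \<in> {1..K}})
             * nrm (\<lambda>y. F1 y - F2 y)" unfolding S_def d_def .
qed

end
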